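(* Let $l_1,l_2,l_3$ be positive integers with $l_1=\min\{l_1,l_2,l_3\}$, $l_2\ge 2$, $l_3\ge 2$, and let $G=\Theta(l_1,l_2,l_3)$. Suppose $l_1$ and $l_3$ have the same parity and $l_1$ and $l_2$ have different parity. If $l_1+l_3\ge 6$, then $G$ is enumeratively chromatic-choosable. Moreover, if $l_1+l_3=4$, then $P_\ell(G,m)=P(G,m)$ for every integer $m\ge 4$.
   Context: For positive integers $l_1,l_2,l_3$, the theta graph $\Theta(l_1,l_2,l_3)$ consists of two end vertices joined by three internally disjoint paths of lengths (numbers of edges) $l_1,l_2,l_3$. An $m$-assignment $L$ for a graph $G$ assigns to each vertex $v$ a set $L(v)$ of $m$ colors; $P(G,L)$ denotes the number of proper colorings $f$ of $G$ with $f(v)\in L(v)$ for all $v$. $P(G,m)$ is the chromatic polynomial (number of proper colorings with colors from $\{1,\dots,m\}$), and the list color function $P_\ell(G,m)$ is the minimum of $P(G,L)$ over all $m$-assignments $L$. $G$ is enumeratively chromatic-choosable if $P_\ell(G,m)=P(G,m)$ for all $m\in\mathbb{N}$. *)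

theory Defs
  imports "HOL-Library.FuncSet"
begin

text \<open>Graphs are given by a vertex set V and a symmetric edge relation E (set of ordered pairs).\<close>

definition proper_col :: "('v \<times> 'v) set \<Rightarrow> ('v \<Rightarrow> nat) \<Rightarrow> bool" where
  "proper_col E f \<longleftrightarrow> (\<forall>(x, y) \<in> E. f x \<noteq> f y)"

definition num_list_col :: "'v set \<Rightarrow> ('v \<times> 'v) set \<Rightarrow> ('v \<Rightarrow> nat set) \<Rightarrow> nat" where
  "num_list_col V E L = card {f \<in> PiE V L. proper_col E f}"

definition chrom_poly :: "'v set \<Rightarrow> ('v \<times> 'v) set \<Rightarrow> nat \<Rightarrow> nat" where
  "chrom_poly V E m = num_list_col V E (\<lambda>_. {1..m})"

definition is_m_assignment :: "'v set \<Rightarrow> nat \<Rightarrow> ('v \<Rightarrow> nat set) \<Rightarrow> bool" where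
  "is_m_assignment V m L \<longleftrightarrow> (\<forall>v\<in>V. finite (L v) \<and> card (L v) = m)"

definition list_col_fun :: "'v set \<Rightarrow> ('v \<times> 'v) set \<Rightarrow> nat \<Rightarrow> nat" where
  "list_col_fun V E m = Inf {num_list_col V E L | L. is_m_assignment V m L}"

definition enum_chrom_choosable :: "'v set \<Rightarrow> ('v \<times> 'v) set \<Rightarrow> bool" where
  "enum_chrom_choosable V E \<longleftrightarrow> (\<forall>m. list_col_fun V E m = chrom_poly V E m)"

text \<open>Theta graph: end vertices (0,0) and (0,1); the j-th vertex (0 \<le> j \<le> l_i)
  of path i \<in> {1,2,3} is theta_pt, with internal vertices (i,j).\<close>
definition theta_len :: "nat \<Rightarrow> nat \<Rightarrow> nat \<Rightarrow> nat \<Rightarrow> nat" where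
  "theta_len l1 l2 l3 i = (if i = 1 then l1 else if i = 2 then l2 else l3)"

definition theta_pt :: "nat \<Rightarrow> nat \<Rightarrow> nat \<Rightarrow> nat \<Rightarrow> nat \<Rightarrow> nat \<times> nat" where
  "theta_pt l1 l2 l3 i j =
     (if j = 0 then (0, 0) else if j = theta_len l1 l2 l3 i then (0, 1) else (i, j))"

definition theta_V :: "nat \<Rightarrow> nat \<Rightarrow> nat \<Rightarrow> (nat \<times> nat) set" where
  "theta_V l1 l2 l3 = {theta_pt l1 l2 l3 i j | i j. i \<in> {1,2,3} \<and> j \<le> theta_len l1 l2 l3 i}"

definition theta_E :: "nat \<Rightarrow> nat \<Rightarrow> nat \<Rightarrow> ((nat \<times> nat) \<times> (nat \<times> nat)) set" where
  "theta_E l1 l2 l3 =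
     (let A = {(theta_pt l1 l2 l3 i j, theta_pt l1 l2 l3 i (Suc j)) | i j.
                 i \<in> {1,2,3} \<and> j < theta_len l1 l2 l3 i}
      in A \<union> A\<inverse>)"

end

theory Submission
  imports Defs
begin


fun Bf :: "int \<Rightarrow> nat \<Rightarrow> int" where
  "Bf m 0 = 0"
| "Bf m (Suc l) = (m - 1) * Bf m l + (if even l then 1 else -1)"

definition Af :: "int \<Rightarrow> nat \<Rightarrow> int" where
  "Af m l = Bf m l + (if even l then 1 else -1)"

lemma Af_Suc: "Af m (Suc l) = (m - 1) * Bf m l"
  by (simp add: Af_def)

lemma Bf_nonneg_aux: "m \<ge> 2 \<Longrightarrow> Bf m l \<ge> 0 \<and> (odd l \<longrightarrow> Bf m l \<ge> 1)"
proof (induction l)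
  case 0 then show ?case by simp
next
  case (Suc l)
  then have h: "Bf m l \<ge> 0" "odd l \<longrightarrow> Bf m l \<ge> 1" by auto
  have "(m - 1) * Bf m l \<ge> Bf m l" using h Suc.prems by (simp add: mult_right_mono[of 1 "m-1" "Bf m l", simplified])
  then show ?case using h by (cases "even l") auto
qed

lemma Bf_nonneg: "m \<ge> 2 \<Longrightarrow> Bf m l \<ge> 0"
  using Bf_nonneg_aux by blast

lemma Bf_odd_pos: "m \<ge> 2 \<Longrightarrow> odd l \<Longrightarrow> Bf m l \<ge> 1"
  using Bf_nonneg_aux by blast

lemma Af_nonneg: "m \<ge> 2 \<Longrightarrow> Af m l \<ge> 0"
  using Bf_nonneg_aux[of m l] by (auto simp: Af_def)

lemma Bf_ge_m_aux: "m \<ge> 3 \<Longrightarrow> Bf m (2 * j + 3) \<ge> m"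
proof (induction j)
  case 0
  have "Bf m 3 = (m - 1) * (m - 2) + 1" by (simp add: numeral_3_eq_3 algebra_simps)
  moreover have "(m - 1) * (m - 3) \<ge> 0" using 0 by simp
  ultimately show ?case by (simp add: algebra_simps)
next
  case (Suc j)
  have e: "Bf m (2 * Suc j + 3) = (m - 1) * ((m - 1) * Bf m (2 * j + 3) - 1) + 1"
    by (simp add: numeral_3_eq_3)
  have "(m - 1) * ((m - 1) * Bf m (2 * j + 3) - 1) + 1 - Bf m (2*j+3) = (m*(m-2)) * Bf m (2*j+3) - (m - 2)"
    by (simp add: algebra_simps)
  moreover have "(m*(m-2)) * Bf m (2*j+3) \<ge> (m*(m-2)) * m" using Suc by (intro mult_left_mono) auto
  moreover have "(m*(m-2)) * m \<ge> (m - 2) + 0" using Suc.prems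
    by (smt (verit) mult_le_cancel_left1 mult_nonneg_nonneg)
  ultimately show ?case using e Suc by linarith
qed

lemma Bf_ge_m: "m \<ge> 3 \<Longrightarrow> odd l \<Longrightarrow> l \<ge> 3 \<Longrightarrow> Bf m l \<ge> m"
proof -
  assume "m \<ge> 3" "odd l" "l \<ge> 3"
  then obtain j where "l = 2 * j + 3"
    by (metis add.commute add_Suc_shift dvd_def even_add le_Suc_ex numeral_3_eq_3 odd_numeral plus_1_eq_Suc odd_two_times_div_two_nat)
  then show ?thesis using Bf_ge_m_aux \<open>m \<ge> 3\<close> by simp
qed

lemma Bf_two: "Bf 2 l = (if even l then 0 else 1)"
  by (induction l) auto

lemma Af_one: "l \<ge> 1 \<Longrightarrow> Af 1 l = 0"
  by (cases l) (auto simp: Af_Suc)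



fun W :: "(nat \<Rightarrow> nat set) \<Rightarrow> nat \<Rightarrow> nat \<Rightarrow> nat \<Rightarrow> nat" where
  "W Ls a 0 c = (if a \<noteq> c then 1 else 0)"
| "W Ls a (Suc k) c = (\<Sum>x\<in>Ls (Suc k) - {c}. W Ls a k x)"

lemma sum_if_neq: "(\<Sum>b\<in>A. (f b::nat) * (if b \<noteq> c then 1 else 0)) = (\<Sum>b\<in>A-{c}. f b)"
proof (cases "finite A")
  case True
  have "(\<Sum>b\<in>A. f b * (if b \<noteq> c then 1 else 0)) = (\<Sum>b\<in>A. if b \<in> -{c} then f b else 0)"
    by (intro sum.cong) auto
  also have "\<dots> = (\<Sum>b\<in>A \<inter> -{c}. f b)" using True by (rule sum.inter_restrict[symmetric])
  finally show ?thesis by (simp add: Diff_eq)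
next
  case False
  then show ?thesis by simp
qed

lemma sum_if_neq': "(\<Sum>b\<in>A. (if c \<noteq> b then 1 else 0) * (f b::nat)) = (\<Sum>b\<in>A-{c}. f b)"
  using sum_if_neq[where f=f and A=A and c=c] by (simp add: mult.commute eq_commute)

lemma W_cong: "(\<And>j. 1 \<le> j \<Longrightarrow> j \<le> k \<Longrightarrow> Ls j = Ls' j) \<Longrightarrow> W Ls a k c = W Ls' a k c"
proof (induction k arbitrary: c)
  case 0 then show ?case by simp
next
  case (Suc k)
  have "Ls (Suc k) = Ls' (Suc k)" using Suc.prems by simp
  moreover have "\<And>x. W Ls a k x = W Ls' a k x" using Suc by simp
  ultimately show ?case by simp
qed

lemma W_CK: "W Ls a (p + q + 1) c = (\<Sum>b\<in>Ls (p+1). W Ls a p b * W (\<lambda>j. Ls (j + (p+1))) b q c)"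
proof (induction q arbitrary: c)
  case 0
  have "W Ls a (p + 0 + 1) c = (\<Sum>x\<in>Ls (Suc p) - {c}. W Ls a p x)" by simp
  also have "\<dots> = (\<Sum>b\<in>Ls (p+1). W Ls a p b * (if b \<noteq> c then 1 else 0))"
    using sum_if_neq[where f="W Ls a p" and A="Ls (Suc p)" and c=c] by simp
  finally show ?case by simp
next
  case (Suc q)
  have "W Ls a (p + Suc q + 1) c = (\<Sum>x\<in>Ls (p + q + 2) - {c}. W Ls a (p + q + 1) x)" by simp
  also have "\<dots> = (\<Sum>x\<in>Ls (p + q + 2) - {c}. \<Sum>b\<in>Ls (p+1). W Ls a p b * W (\<lambda>j. Ls (j + (p+1))) b q x)"
    using Suc by simp
  also have "\<dots> = (\<Sum>b\<in>Ls (p+1). \<Sum>x\<in>Ls (p + q + 2) - {c}. W Ls a p b * W (\<lambda>j. Ls (j + (p+1))) b q x)"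
    by (rule sum.swap)
  also have "\<dots> = (\<Sum>b\<in>Ls (p+1). W Ls a p b * W (\<lambda>j. Ls (j + (p+1))) b (Suc q) c)"
    by (simp add: sum_distrib_left add.commute)
  finally show ?case by simp
qed

lemma W_first: "W Ls a (Suc k) c = (\<Sum>b\<in>Ls 1. (if a \<noteq> b then 1 else 0) * W (\<lambda>j. Ls (j + 1)) b k c)"
  using W_CK[of Ls a 0 k c] by simp

lemma W_rev: "W Ls a k b = W (\<lambda>j. Ls (k + 1 - j)) b k a"
proof (induction k arbitrary: Ls a b)
  case 0 then show ?case by auto
next
  case (Suc k)
  have "W Ls a (Suc k) b = (\<Sum>x\<in>Ls 1. (if a \<noteq> x then 1 else 0) * W (\<lambda>j. Ls (j + 1)) x k b)"
    by (rule W_first)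
  also have "\<dots> = (\<Sum>x\<in>Ls 1. (if a \<noteq> x then 1 else 0) * W (\<lambda>j. Ls (k + 1 - j + 1)) b k x)"
    by (simp only: Suc.IH[of "\<lambda>j. Ls (j+1)"])
  also have "\<dots> = (\<Sum>x\<in>Ls 1 - {a}. W (\<lambda>j. Ls (k + 1 - j + 1)) b k x)"
    by (rule sum_if_neq')
  also have "\<dots> = (\<Sum>x\<in>Ls 1 - {a}. W (\<lambda>j. Ls (Suc k + 1 - j)) b k x)"
    by (intro sum.cong refl W_cong) (simp add: Suc_diff_le)
  also have "\<dots> = W (\<lambda>j. Ls (Suc k + 1 - j)) b (Suc k) a" by simp
  finally show ?case .
qed

lemma W_const:
  assumes "finite S" "a \<in> S" "c \<in> S" "\<And>j. 1 \<le> j \<Longrightarrow> j \<le> k \<Longrightarrow> Ls j = S"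
  shows "int (W Ls a k c) = (if a = c then Af (int (card S)) (k+1) else Bf (int (card S)) (k+1))"
  using assms(3,4)
proof (induction k arbitrary: c)
  case 0 then show ?case by (simp add: Af_def)
next
  case (Suc k)
  let ?m = "int (card S)"
  have cS: "card S \<ge> 1" using assms(1,2) by (metis One_nat_def Suc_leI card_gt_0_iff empty_iff)
  have IH: "\<And>x. x \<in> S \<Longrightarrow> int (W Ls a k x) = (if a = x then Af ?m (k+1) else Bf ?m (k+1))"
    using Suc.IH Suc.prems by auto
  have "int (W Ls a (Suc k) c) = (\<Sum>x\<in>S - {c}. int (W Ls a k x))"
    using Suc.prems by simp
  also have "\<dots> = (\<Sum>x\<in>S - {c}. (if a = x then Af ?m (k+1) else Bf ?m (k+1)))"
    using IH by (intro sum.cong) auto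
  also have "\<dots> = (if a = c then Af ?m (Suc k+1) else Bf ?m (Suc k+1))"
  proof (cases "a = c")
    case True
    then have "(\<Sum>x\<in>S - {c}. (if a = x then Af ?m (k+1) else Bf ?m (k+1))) = (\<Sum>x\<in>S - {c}. Bf ?m (k+1))"
      by (intro sum.cong) auto
    also have "\<dots> = (?m - 1) * Bf ?m (k+1)" using assms(1) Suc.prems cS
      by (simp add: card_Diff_singleton of_nat_diff)
    finally show ?thesis using True by (simp add: Af_Suc)
  next
    case False
    have c2: "card {a, c} \<le> card S" using assms(1,2) Suc.prems by (intro card_mono) auto
    have c2': "card S \<ge> 2" using c2 False by simp
    have cd: "card (S - {c} - {a}) = card S - 2" using assms(1,2) Suc.prems False
      by (simp add: card_Diff_singleton)
    have "a \<in> S - {c}" using False assms(2) by auto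
    then have "(\<Sum>x\<in>S - {c}. (if a = x then Af ?m (k+1) else Bf ?m (k+1))) =
        Af ?m (k+1) + (\<Sum>x\<in>S - {c} - {a}. (if a = x then Af ?m (k+1) else Bf ?m (k+1)))"
      using assms(1) by (simp add: sum.remove)
    also have "(\<Sum>x\<in>S - {c} - {a}. (if a = x then Af ?m (k+1) else Bf ?m (k+1))) = (\<Sum>x\<in>S - {c} - {a}. Bf ?m (k+1))"
      by (intro sum.cong) auto
    also have "\<dots> = (?m - 2) * Bf ?m (k+1)"
      using cd c2' by (simp add: of_nat_diff)
    finally show ?thesis using False by (simp add: Af_def algebra_simps)
  qed
  finally show ?case .
qed



definition Gf :: "nat \<Rightarrow> nat \<Rightarrow> nat \<Rightarrow> int" where
  "Gf m l t = (if odd l then int t * Bf (int m) l - 1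
               else int t * Bf (int m) l + (if t \<ge> m then 1 else 0))"

lemma Gf_step_arith:
  fixes S R B B' :: int and m t r :: nat
  assumes m2: "m \<ge> 2" and t1: "t \<ge> 1" and B0: "B \<ge> 0"
    and rr: "r + t \<ge> m" "r \<le> m" and R0: "R \<ge> 0"
    and odd_case: "odd l \<Longrightarrow> S \<ge> int m * B - 1 \<and> R \<ge> int r * B - 1 \<and> B' = (int m - 1) * B - 1"
    and even_case: "even l \<Longrightarrow> S \<ge> int m * B + 1 \<and> R \<ge> int r * B + (if r \<ge> m then 1 else 0) \<and> B' = (int m - 1) * B + 1"
  shows "(int t - 1) * S + R \<ge> (if odd (Suc l) then int t * B' - 1 else int t * B' + (if t \<ge> m then 1 else 0))"
proof -
  have tS: "(int t - 1) * S \<ge> (int t - 1) * (if odd l then int m * B - 1 else int m * B + 1)"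
    using odd_case even_case t1 by (cases "odd l") (auto intro: mult_left_mono)
  show ?thesis
  proof (cases "t < m")
    case True
    then have "r \<ge> m - t" using rr by simp
    then have rB: "int r * B \<ge> (int m - int t) * B" using True B0 by (intro mult_right_mono) auto
    show ?thesis
    proof (cases "odd l")
      case True
      have hB': "B' = (int m - 1) * B - 1" using odd_case True by blast
      have e1: "B' * int t = B * int m * int t - B * int t - int t" unfolding hB' by (simp add: algebra_simps)
      have e2: "(int t - 1) * S = S * int t - S" by (simp add: algebra_simps)
      have e3: "(int t - 1) * (int m * B - 1) = B * int m * int t - int t - B * int m + 1" by (simp add: algebra_simps)
      have e4: "(int m - int t) * B = B * int m - B * int t" by (simp add: algebra_simps)
      have "R \<ge> int r * B - 1" using odd_case True by simp
      then show ?thesis using tS rB True e1 e2 e3 e4 \<open>t < m\<close> by (simp add: mult.commute)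
    next
      case False
      have hB': "B' = (int m - 1) * B + 1" using even_case False by blast
      have e1: "B' * int t = B * int m * int t - B * int t + int t" unfolding hB' by (simp add: algebra_simps)
      have e2: "(int t - 1) * S = S * int t - S" by (simp add: algebra_simps)
      have e3: "(int t - 1) * (int m * B + 1) = B * int m * int t + int t - B * int m - 1" by (simp add: algebra_simps)
      have e4: "(int m - int t) * B = B * int m - B * int t" by (simp add: algebra_simps)
      have "R \<ge> int r * B" using even_case False by (auto split: if_splits)
      then show ?thesis using tS rB False e1 e2 e3 e4 \<open>t < m\<close> by (simp add: mult.commute)
    qed
  next
    case False
    then have tB: "int t * B \<ge> int m * B" using B0 by (intro mult_right_mono) auto
    show ?thesis
    proof (cases "odd l")
      case True
      have hB': "B' = (int m - 1) * B - 1" using odd_case True by blast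
      have e1: "B' * int t = B * int m * int t - B * int t - int t" unfolding hB' by (simp add: algebra_simps)
      have e2: "(int t - 1) * S = S * int t - S" by (simp add: algebra_simps)
      have e3: "(int t - 1) * (int m * B - 1) = B * int m * int t - int t - B * int m + 1" by (simp add: algebra_simps)
      show ?thesis using tS tB True R0 e1 e2 e3 False by (simp add: mult.commute)
    next
      case False
      have hB': "B' = (int m - 1) * B + 1" using even_case False by blast
      have e1: "B' * int t = B * int m * int t - B * int t + int t" unfolding hB' by (simp add: algebra_simps)
      have e2: "(int t - 1) * S = S * int t - S" by (simp add: algebra_simps)
      have e3: "(int t - 1) * (int m * B + 1) = B * int m * int t + int t - B * int m - 1" by (simp add: algebra_simps)
      show ?thesis using tS tB False R0 e1 e2 e3 \<open>\<not> t < m\<close> by (simp add: mult.commute)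
    qed
  qed
qed

lemma W_inv:
  assumes m2: "m \<ge> 2" and Ls: "\<And>j. 1 \<le> j \<Longrightarrow> j \<le> k \<Longrightarrow> finite (Ls j) \<and> card (Ls j) = m"
    and fX: "finite X"
  shows "int (\<Sum>x\<in>X. W Ls a k x) \<ge> Gf m (Suc k) (card X)"
  using Ls fX
proof (induction k arbitrary: X)
  case 0
  have "(\<Sum>x\<in>X. W Ls a 0 x) = (\<Sum>x\<in>X. (if a \<noteq> x then 1 else 0) * 1)" by simp
  also have "\<dots> = card (X - {a})" by (simp only: sum_if_neq') simp
  finally have "(\<Sum>x\<in>X. W Ls a 0 x) = card (X - {a})" .
  moreover have "card (X - {a}) \<ge> card X - 1" by (simp add: card_Diff_singleton_if)
  ultimately show ?case by (simp add: Gf_def)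
next
  case (Suc k)
  define L where "L = Ls (Suc k)"
  have fL: "finite L" and cL: "card L = m" using Suc.prems(1)[of "Suc k"] by (auto simp: L_def)
  define f where "f = (\<lambda>y. int (W Ls a k y))"
  define S where "S = (\<Sum>y\<in>L. f y)"
  define R where "R = (\<Sum>y\<in>L - X. f y)"
  define t where "t = card X"
  have IH: "\<And>Y. finite Y \<Longrightarrow> (\<Sum>y\<in>Y. f y) \<ge> Gf m (Suc k) (card Y)"
    using Suc.IH Suc.prems(1) by (simp add: f_def)
  have "int (\<Sum>x\<in>X. W Ls a (Suc k) x) = (\<Sum>x\<in>X. \<Sum>y\<in>L - {x}. f y)"
    by (simp add: L_def f_def of_nat_sum)
  also have "\<dots> = (\<Sum>x\<in>X. S - (if x \<in> L then f x else 0))"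
    by (intro sum.cong refl) (simp add: S_def sum_diff1 fL)
  also have "\<dots> = int t * S - (\<Sum>x\<in>X. (if x \<in> L then f x else 0))"
    by (simp add: sum_subtractf t_def)
  also have "(\<Sum>x\<in>X. (if x \<in> L then f x else 0)) = (\<Sum>x\<in>X \<inter> L. f x)"
    using Suc.prems(2) by (simp add: sum.inter_restrict)
  also have "(\<Sum>x\<in>X \<inter> L. f x) = S - R"
    using sum.Int_Diff[OF fL, of f X] by (simp add: S_def R_def Int_commute)
  finally have eq: "int (\<Sum>x\<in>X. W Ls a (Suc k) x) = (int t - 1) * S + R" by (simp add: algebra_simps)
  show ?case
  proof (cases "t = 0")
    case True
    then have "X = {}" using Suc.prems(2) by (simp add: t_def)
    then show ?thesis using m2 by (simp add: Gf_def)
  next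
    case False
    have r1: "card (L - X) + t \<ge> m"
      using diff_card_le_card_Diff[OF Suc.prems(2), of L] cL card_mono[OF Suc.prems(2), of "L \<inter> X"]
      by (simp add: t_def) 
    have r2: "card (L - X) \<le> m" using cL fL by (metis card_mono Diff_subset)
    have S1: "S \<ge> Gf m (Suc k) m" using IH[OF fL] cL by (simp add: S_def)
    have R1: "R \<ge> Gf m (Suc k) (card (L - X))" using IH[of "L - X"] fL by (simp add: R_def)
    have R0: "R \<ge> 0" by (simp add: R_def f_def sum_nonneg)
    have B0: "Bf (int m) (Suc k) \<ge> 0" using m2 Bf_nonneg[of "int m" "Suc k"] by linarith
    have "(int t - 1) * S + R \<ge> (if odd (Suc (Suc k)) then int t * Bf (int m) (Suc (Suc k)) - 1
        else int t * Bf (int m) (Suc (Suc k)) + (if t \<ge> m then 1 else 0))"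
    proof (rule Gf_step_arith[OF m2 _ B0 _ r2 R0])
      show "1 \<le> t" using False by simp
      show "m \<le> card (L - X) + t" using r1 .
      show "odd (Suc k) \<Longrightarrow> S \<ge> int m * Bf (int m) (Suc k) - 1 \<and> R \<ge> int (card (L - X)) * Bf (int m) (Suc k) - 1
          \<and> Bf (int m) (Suc (Suc k)) = (int m - 1) * Bf (int m) (Suc k) - 1"
        using S1 R1 by (simp add: Gf_def)
      show "even (Suc k) \<Longrightarrow> S \<ge> int m * Bf (int m) (Suc k) + 1 \<and> R \<ge> int (card (L - X)) * Bf (int m) (Suc k) + (if card (L - X) \<ge> m then 1 else 0)
          \<and> Bf (int m) (Suc (Suc k)) = (int m - 1) * Bf (int m) (Suc k) + 1"
        using S1 R1 by (simp add: Gf_def)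
    qed
    then show ?thesis using eq unfolding t_def by (simp add: Gf_def del: Bf.simps)
  qed
qed



lemma W_pt:
  assumes m2: "m \<ge> 2" and Ls: "\<And>j. 1 \<le> j \<Longrightarrow> j \<le> k \<Longrightarrow> finite (Ls j) \<and> card (Ls j) = m"
  shows "int (W Ls a k x) \<ge> (if odd (Suc k) then Af (int m) (Suc k) else Bf (int m) (Suc k))"
proof -
  have "Gf m (Suc k) (card {x}) \<le> int (\<Sum>y\<in>{x}. W Ls a k y)"
    by (rule W_inv[OF m2]) (use Ls in auto)
  then show ?thesis using m2 by (auto simp: Gf_def Af_def simp del: Bf.simps)
qed

lemma rotation:
  assumes n2: "s \<ge> 1" "s < n"
  shows "(\<Sum>a\<in>C 0. W C a (n-1) a) = (\<Sum>b\<in>C s. W (\<lambda>j. C ((j + s) mod n)) b (n-1) b)"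
proof -
  define D where "D = (\<lambda>j. C ((j + s) mod n))"
  have "(\<Sum>a\<in>C 0. W C a (n-1) a) = (\<Sum>a\<in>C 0. \<Sum>b\<in>C s. W C a (s-1) b * W (\<lambda>j. C (j + s)) b (n-1-s) a)"
  proof (intro sum.cong refl)
    fix a
    have e1: "s - 1 + (n - 1 - s) + 1 = n - 1" "s - 1 + 1 = s" using n2 by auto
    show "W C a (n-1) a = (\<Sum>b\<in>C s. W C a (s-1) b * W (\<lambda>j. C (j + s)) b (n-1-s) a)"
      using W_CK[of C a "s-1" "n-1-s" a] unfolding e1 .
  qed
  also have "\<dots> = (\<Sum>b\<in>C s. \<Sum>a\<in>C 0. W C a (s-1) b * W (\<lambda>j. C (j + s)) b (n-1-s) a)"
    by (rule sum.swap)
  also have "\<dots> = (\<Sum>b\<in>C s. W D b (n-1) b)"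
  proof (intro sum.cong refl)
    fix b
    have e2: "n - 1 - s + (s - 1) + 1 = n - 1" "n - 1 - s + 1 = n - s" using n2 by auto
    have "W D b (n-1) b = (\<Sum>a\<in>D (n-s). W D b (n-1-s) a * W (\<lambda>j. D (j + (n-s))) a (s-1) b)"
      using W_CK[of D b "n-1-s" "s-1" b] unfolding e2 .
    also have "D (n-s) = C 0" using n2 by (simp add: D_def)
    also have "(\<Sum>a\<in>C 0. W D b (n-1-s) a * W (\<lambda>j. D (j + (n-s))) a (s-1) b)
        = (\<Sum>a\<in>C 0. W C a (s-1) b * W (\<lambda>j. C (j + s)) b (n-1-s) a)"
    proof (intro sum.cong refl)
      fix a
      have "W D b (n-1-s) a = W (\<lambda>j. C (j + s)) b (n-1-s) a"
        by (rule W_cong) (use n2 in \<open>simp add: D_def\<close>)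
      moreover have "W (\<lambda>j. D (j + (n-s))) a (s-1) b = W C a (s-1) b"
      proof (rule W_cong)
        fix j assume "1 \<le> j" "j \<le> s - 1"
        then have "(j + (n - s) + s) mod n = j" using n2 by simp
        then show "D (j + (n - s)) = C j" by (simp add: D_def)
      qed
      ultimately show "W D b (n-1-s) a * W (\<lambda>j. D (j + (n-s))) a (s-1) b = W C a (s-1) b * W (\<lambda>j. C (j + s)) b (n-1-s) a"
        by simp
    qed
    finally show "(\<Sum>a\<in>C 0. W C a (s-1) b * W (\<lambda>j. C (j + s)) b (n-1-s) a) = W D b (n-1) b" by simp
  qed
  finally show ?thesis by (simp add: D_def)
qed

lemma all_eq_chain:
  assumes "\<And>s. s + 1 < n \<Longrightarrow> C s = C (Suc s)"
  shows "j < n \<Longrightarrow> C j = C 0"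
  using assms by (induction j) auto

lemma card_int_lt:
  assumes "finite A" "finite B" "card A = m" "card B = m" "A \<noteq> B"
  shows "card (A \<inter> B) \<le> m - 1"
proof (rule ccontr)
  assume "\<not> card (A \<inter> B) \<le> m - 1"
  then have "card (A \<inter> B) \<ge> m" by simp
  moreover have "card (A \<inter> B) \<le> card A" "card (A \<inter> B) \<le> card B" using assms by (auto intro: card_mono)
  ultimately have "card (A \<inter> B) = card A" "card (A \<inter> B) = card B" using assms by auto
  have "A \<inter> B = A" by (rule card_subset_eq) (use assms \<open>card (A \<inter> B) = card A\<close> in auto)
  moreover have "A \<inter> B = B" by (rule card_subset_eq) (use assms \<open>card (A \<inter> B) = card B\<close> in auto)
  ultimately show False using assms by auto
qed

lemma ec_equal:
  assumes m3: "m \<ge> 3" and n4: "n \<ge> 4"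
    and C: "\<And>j. j < n \<Longrightarrow> finite (C j) \<and> card (C j) = m"
    and eq: "\<forall>j<n. C j = C 0"
  shows "int (\<Sum>a\<in>C 0. W C a (n-1) a) = int m * Af (int m) n"
proof -
  have fC0: "finite (C 0)" and cC0: "card (C 0) = m" using C[of 0] n4 by auto
  have "int (\<Sum>a\<in>C 0. W C a (n-1) a) = (\<Sum>a\<in>C 0. int (W C a (n-1) a))" by simp
  also have "\<dots> = (\<Sum>a\<in>C 0. Af (int m) n)"
  proof (intro sum.cong refl)
    fix a assume a: "a \<in> C 0"
    have "int (W C a (n-1) a) = (if a = a then Af (int (card (C 0))) (n-1+1) else Bf (int (card (C 0))) (n-1+1))"
    proof (rule W_const[OF fC0 a a])
      fix j assume "1 \<le> j" "j \<le> n - 1"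
      then have "j < n" using n4 by linarith
      then show "C j = C 0" using eq by blast
    qed
    then show "int (W C a (n-1) a) = Af (int m) n" using cC0 n4 by simp
  qed
  also have "\<dots> = int m * Af (int m) n" using cC0 by simp
  finally show ?thesis .
qed

lemma ec_row:
  assumes m2: "m \<ge> 2" and Dj: "\<And>j. finite (D j) \<and> card (D j) = m"
    and oddk: "odd (Suc k)"
  shows "int (W D b (Suc (Suc k) - 1) b) \<ge> int m * Bf (int m) (Suc k) - 1 - (if b \<in> D (Suc k) then Bf (int m) (Suc k) else 0)"
proof -
  define B where "B = Bf (int m) (Suc k)"
  have w: "W D b (Suc (Suc k) - 1) b = (\<Sum>x\<in>D (Suc k) - {b}. W D b k x)" by simp
  have g: "int (\<Sum>x\<in>D (Suc k) - {b}. W D b k x) \<ge> Gf m (Suc k) (card (D (Suc k) - {b}))"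
    by (rule W_inv[OF m2]) (use Dj in auto)
  have c: "card (D (Suc k) - {b}) = m - (if b \<in> D (Suc k) then 1 else 0)" using Dj by (simp add: card_Diff_singleton_if)
  have gg: "Gf m (Suc k) (card (D (Suc k) - {b})) = int (card (D (Suc k) - {b})) * B - 1"
    using oddk by (simp add: Gf_def B_def del: Bf.simps)
  show ?thesis
  proof (cases "b \<in> D (Suc k)")
    case True
    then have "int (card (D (Suc k) - {b})) = int m - 1" using c m2 by simp
    then have "Gf m (Suc k) (card (D (Suc k) - {b})) = (int m - 1) * B - 1" using gg by simp
    then have "int (W D b (Suc (Suc k) - 1) b) \<ge> (int m - 1) * B - 1" using w g by simp
    then show ?thesis using True by (simp add: algebra_simps B_def del: Bf.simps)
  next
    case False
    then show ?thesis using w g gg c by (simp add: B_def del: Bf.simps)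
  qed
qed

lemma even_cycle:
  assumes m3: "m \<ge> 3" and n4: "n \<ge> 4" and ev: "even n"
    and C: "\<And>j. j < n \<Longrightarrow> finite (C j) \<and> card (C j) = m"
  shows "int (\<Sum>a\<in>C 0. W C a (n-1) a) \<ge> int m * Af (int m) n"
proof (cases "\<forall>j<n. C j = C 0")
  case True
  show ?thesis using ec_equal[OF m3 n4 C True] by linarith
next
  case False
  obtain s where s: "s + 1 < n" "C s \<noteq> C (Suc s)"
    using False all_eq_chain[of n C] by blast
  define D where "D = (\<lambda>j. C ((j + (s+1)) mod n))"
  have rot: "(\<Sum>a\<in>C 0. W C a (n-1) a) = (\<Sum>b\<in>C (s+1). W D b (n-1) b)"
    unfolding D_def by (rule rotation) (use s in auto)
  have Dj: "\<And>j. finite (D j) \<and> card (D j) = m" unfolding D_def using C n4 by simp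
  have D0: "D 0 = C (s+1)" using s by (simp add: D_def)
  define k where "k = n - 2"
  have nk: "n = Suc (Suc k)" using n4 by (simp add: k_def)
  have e: "Suc k + (s + 1) = s + n" using nk by simp
  have "(Suc k + (s + 1)) mod n = s" unfolding e using s by simp
  then have Dn: "D (Suc k) = C s" by (simp add: D_def)
  define B where "B = Bf (int m) (Suc k)"
  have oddk: "odd (Suc k)" using ev nk by simp
  have B_ge: "B \<ge> int m" unfolding B_def using Bf_ge_m[of "int m" "Suc k"] m3 oddk n4 nk by simp
  have m2: "m \<ge> 2" using m3 by simp
  have fDn: "finite (D (Suc k))" and cDn: "card (D (Suc k)) = m" using Dj by auto
  have fD0: "finite (D 0)" and cD0: "card (D 0) = m" using Dj by auto
  have row: "int (W D b (n-1) b) \<ge> int m * B - 1 - (if b \<in> D (Suc k) then B else 0)" for b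
    using ec_row[of m D k b, OF m2 Dj oddk] unfolding B_def nk .
  have "int (\<Sum>b\<in>D 0. W D b (n-1) b) = (\<Sum>b\<in>D 0. int (W D b (n-1) b))" by simp
  also have "\<dots> \<ge> (\<Sum>b\<in>D 0. int m * B - 1 - (if b \<in> D (Suc k) then B else 0))"
    by (intro sum_mono row)
  finally have s1: "int (\<Sum>b\<in>D 0. W D b (n-1) b) \<ge> (\<Sum>b\<in>D 0. int m * B - 1 - (if b \<in> D (Suc k) then B else 0))" .
  have "(\<Sum>b\<in>D 0. int m * B - 1 - (if b \<in> D (Suc k) then B else 0)) = int m * (int m * B - 1) - (\<Sum>b\<in>D 0. (if b \<in> D (Suc k) then B else 0))"
    using cD0 by (simp add: sum_subtractf)
  also have "(\<Sum>b\<in>D 0. (if b \<in> D (Suc k) then B else 0)) = int (card (D 0 \<inter> D (Suc k))) * B"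
    using fD0 by (simp add: sum.inter_restrict[symmetric])
  finally have s2: "(\<Sum>b\<in>D 0. int m * B - 1 - (if b \<in> D (Suc k) then B else 0)) = int m * (int m * B - 1) - int (card (D 0 \<inter> D (Suc k))) * B" .
  have "D 0 \<noteq> D (Suc k)" using D0 Dn s by simp
  then have ci: "card (D 0 \<inter> D (Suc k)) \<le> m - 1" using card_int_lt fD0 fDn cD0 cDn by blast
  then have ci': "int (card (D 0 \<inter> D (Suc k))) * B \<le> (int m - 1) * B"
    using B_ge m3 by (intro mult_right_mono) auto
  have AfB: "Af (int m) n = (int m - 1) * B"
    using Af_Suc[of "int m" "Suc k"] nk by (simp add: B_def del: Bf.simps)
  have "int m * (int m * B - 1) - (int m - 1) * B \<ge> int m * ((int m - 1) * B)"
    using B_ge by (simp add: algebra_simps)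
  then show ?thesis using rot D0 s1 s2 ci' AfB by simp
qed



definition ext :: "nat \<Rightarrow> nat \<Rightarrow> nat \<Rightarrow> (nat \<Rightarrow> nat) \<Rightarrow> nat \<Rightarrow> nat" where
  "ext a b l g j = (if j = 0 then a else if j = l then b else g j)"

definition PC :: "(nat \<Rightarrow> nat set) \<Rightarrow> nat \<Rightarrow> nat \<Rightarrow> nat \<Rightarrow> (nat \<Rightarrow> nat) set" where
  "PC Ls l a b = {g \<in> PiE {1..<l} Ls. \<forall>j<l. ext a b l g j \<noteq> ext a b l g (Suc j)}"

lemma PC_finite: "(\<And>j. 1 \<le> j \<Longrightarrow> j < l \<Longrightarrow> finite (Ls j)) \<Longrightarrow> finite (PC Ls l a b)"
proof -
  assume h: "\<And>j. 1 \<le> j \<Longrightarrow> j < l \<Longrightarrow> finite (Ls j)"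
  have "PC Ls l a b \<subseteq> PiE {1..<l} Ls" by (auto simp: PC_def)
  moreover have "finite (PiE {1..<l} Ls)" by (rule finite_PiE) (use h in auto)
  ultimately show ?thesis by (rule finite_subset)
qed

lemma PC_one: "PC Ls (Suc 0) a b = (if a \<noteq> b then {\<lambda>_. undefined} else {})"
  by (auto simp: PC_def ext_def)

lemma PC_Suc:
  assumes k: "k \<ge> 1"
  shows "PC Ls (Suc k) a b = (\<Union>x\<in>Ls k - {b}. (\<lambda>h. h(k := x)) ` PC Ls k a x)"
proof (intro equalityI subsetI)
  fix g assume g: "g \<in> PC Ls (Suc k) a b"
  define x where "x = g k"
  define h where "h = g(k := undefined)"
  have gP: "g \<in> PiE {1..<Suc k} Ls" and gc: "\<And>j. j < Suc k \<Longrightarrow> ext a b (Suc k) g j \<noteq> ext a b (Suc k) g (Suc j)"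
    using g by (auto simp: PC_def)
  have xL: "x \<in> Ls k" using gP k by (auto simp: x_def)
  have xb: "x \<noteq> b" using gc[of k] k by (simp add: ext_def x_def)
  have hP: "h \<in> PiE {1..<k} Ls" using gP by (auto simp: h_def PiE_def Pi_def extensional_def)
  have ee: "ext a x k h j = ext a b (Suc k) g j" if "j \<le> k" for j
    using that by (auto simp: ext_def h_def x_def)
  have hc: "\<forall>j<k. ext a x k h j \<noteq> ext a x k h (Suc j)"
    using gc ee by simp
  have "g = h(k := x)" by (simp add: h_def x_def)
  then show "g \<in> (\<Union>x\<in>Ls k - {b}. (\<lambda>h. h(k := x)) ` PC Ls k a x)"
    using xL xb hP hc by (auto simp: PC_def)
next
  fix g assume "g \<in> (\<Union>x\<in>Ls k - {b}. (\<lambda>h. h(k := x)) ` PC Ls k a x)"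
  then obtain x h where xL: "x \<in> Ls k" and xb: "x \<noteq> b" and hP: "h \<in> PiE {1..<k} Ls"
    and hc: "\<And>j. j < k \<Longrightarrow> ext a x k h j \<noteq> ext a x k h (Suc j)" and g: "g = h(k := x)"
    by (auto simp: PC_def)
  have gP: "g \<in> PiE {1..<Suc k} Ls" using hP xL k g by (auto simp: PiE_def Pi_def extensional_def)
  have ee: "ext a x k h j = ext a b (Suc k) g j" if "j \<le> k" for j
    using that k by (auto simp: ext_def g)
  have "ext a b (Suc k) g j \<noteq> ext a b (Suc k) g (Suc j)" if "j < Suc k" for j
  proof (cases "j = k")
    case True then show ?thesis using xb k by (simp add: ext_def g)
  next
    case False then show ?thesis using hc[of j] ee[of j] ee[of "Suc j"] that by simp
  qed
  then show "g \<in> PC Ls (Suc k) a b" using gP by (auto simp: PC_def)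
qed

lemma PC_card:
  assumes "\<And>j. 1 \<le> j \<Longrightarrow> j \<le> k \<Longrightarrow> finite (Ls j)"
  shows "card (PC Ls (Suc k) a b) = W Ls a k b"
  using assms
proof (induction k arbitrary: b)
  case 0 then show ?case by (simp add: PC_one)
next
  case (Suc k)
  have "card (PC Ls (Suc (Suc k)) a b) = card (\<Union>x\<in>Ls (Suc k) - {b}. (\<lambda>h. h(Suc k := x)) ` PC Ls (Suc k) a x)"
    by (simp add: PC_Suc)
  also have "\<dots> = (\<Sum>x\<in>Ls (Suc k) - {b}. card ((\<lambda>h. h(Suc k := x)) ` PC Ls (Suc k) a x))"
  proof (rule card_UN_disjoint)
    show "finite (Ls (Suc k) - {b})" using Suc.prems by simp
    show "\<forall>x\<in>Ls (Suc k) - {b}. finite ((\<lambda>h. h(Suc k := x)) ` PC Ls (Suc k) a x)"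
    proof
      fix x
      have "finite (PC Ls (Suc k) a x)" by (rule PC_finite) (use Suc.prems in auto)
      then show "finite ((\<lambda>h. h(Suc k := x)) ` PC Ls (Suc k) a x)" by simp
    qed
    show "\<forall>x\<in>Ls (Suc k) - {b}. \<forall>y\<in>Ls (Suc k) - {b}. x \<noteq> y \<longrightarrow>
        (\<lambda>h. h(Suc k := x)) ` PC Ls (Suc k) a x \<inter> (\<lambda>h. h(Suc k := y)) ` PC Ls (Suc k) a y = {}"
      by (auto dest: fun_cong[where x="Suc k"])
  qed
  also have "\<dots> = (\<Sum>x\<in>Ls (Suc k) - {b}. card (PC Ls (Suc k) a x))"
  proof (intro sum.cong refl card_image inj_onI)
    fix x g h assume "g \<in> PC Ls (Suc k) a x" "h \<in> PC Ls (Suc k) a x" "g(Suc k := x) = h(Suc k := x)"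
    then show "g = h" unfolding PC_def
      by (metis (no_types, lifting) PiE_arb atLeastLessThan_iff fun_upd_idem_iff fun_upd_upd lessI less_irrefl mem_Collect_eq)
  qed
  also have "\<dots> = (\<Sum>x\<in>Ls (Suc k) - {b}. W Ls a k x)"
    using Suc by simp
  finally show ?case by simp
qed



lemma theta_V_eq:
  assumes "l1 \<ge> 1" "l2 \<ge> 1" "l3 \<ge> 1"
  shows "theta_V l1 l2 l3 = {(0,0),(0,1)} \<union> {(i,j). i \<in> {1,2,3} \<and> 1 \<le> j \<and> j < theta_len l1 l2 l3 i}"
proof (intro equalityI subsetI)
  fix v assume "v \<in> theta_V l1 l2 l3"
  then obtain i j where "i \<in> {1,2,3}" "j \<le> theta_len l1 l2 l3 i" "v = theta_pt l1 l2 l3 i j"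
    by (auto simp: theta_V_def)
  then show "v \<in> {(0,0),(0,1)} \<union> {(i,j). i \<in> {1,2,3} \<and> 1 \<le> j \<and> j < theta_len l1 l2 l3 i}"
    by (auto simp: theta_pt_def)
next
  fix v assume v: "v \<in> {(0,0),(0,1)} \<union> {(i,j). i \<in> {1,2,3} \<and> 1 \<le> j \<and> j < theta_len l1 l2 l3 i}"
  have l1: "theta_len l1 l2 l3 1 = l1" by (simp add: theta_len_def)
  show "v \<in> theta_V l1 l2 l3"
  proof (cases "v = (0,0)")
    case True
    then have "v = theta_pt l1 l2 l3 1 0" by (simp add: theta_pt_def)
    then show ?thesis unfolding theta_V_def by force
  next
    case False
    show ?thesis
    proof (cases "v = (0,1)")
      case True
      then have "v = theta_pt l1 l2 l3 1 l1" using assms by (simp add: theta_pt_def theta_len_def)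
      then show ?thesis unfolding theta_V_def using l1 by force
    next
      case False2: False
      then obtain i j where "v = (i,j)" "i \<in> {1,2,3}" "1 \<le> j" "j < theta_len l1 l2 l3 i"
        using v False by auto
      then have "v = theta_pt l1 l2 l3 i j" by (simp add: theta_pt_def)
      then show ?thesis unfolding theta_V_def using \<open>i \<in> {1,2,3}\<close> \<open>j < theta_len l1 l2 l3 i\<close>
        by (intro CollectI exI[of _ i] exI[of _ j]) auto
    qed
  qed
qed

lemma proper_theta:
  "proper_col (theta_E l1 l2 l3) f \<longleftrightarrow>
    (\<forall>i\<in>{1,2,3}. \<forall>j<theta_len l1 l2 l3 i. f (theta_pt l1 l2 l3 i j) \<noteq> f (theta_pt l1 l2 l3 i (Suc j)))"
proof -
  define A where "A = {(theta_pt l1 l2 l3 i j, theta_pt l1 l2 l3 i (Suc j)) | i j. i \<in> {1,2,3} \<and> j < theta_len l1 l2 l3 i}"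
  have E: "theta_E l1 l2 l3 = A \<union> A\<inverse>" by (simp add: theta_E_def A_def Let_def)
  show ?thesis
  proof
    assume H: "proper_col (theta_E l1 l2 l3) f"
    show "\<forall>i\<in>{1,2,3}. \<forall>j<theta_len l1 l2 l3 i. f (theta_pt l1 l2 l3 i j) \<noteq> f (theta_pt l1 l2 l3 i (Suc j))"
    proof (intro ballI allI impI)
      fix i j assume "i \<in> {1::nat,2,3}" "j < theta_len l1 l2 l3 i"
      then have "(theta_pt l1 l2 l3 i j, theta_pt l1 l2 l3 i (Suc j)) \<in> theta_E l1 l2 l3"
        unfolding E A_def by blast
      then show "f (theta_pt l1 l2 l3 i j) \<noteq> f (theta_pt l1 l2 l3 i (Suc j))"
        using H unfolding proper_col_def by blast
    qed
  next
    assume H: "\<forall>i\<in>{1,2,3}. \<forall>j<theta_len l1 l2 l3 i. f (theta_pt l1 l2 l3 i j) \<noteq> f (theta_pt l1 l2 l3 i (Suc j))"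
    have "f x \<noteq> f y" if "(x, y) \<in> A" for x y
      using that H unfolding A_def by blast
    moreover have "f x \<noteq> f y" if "(x, y) \<in> A\<inverse>" for x y
    proof -
      have "(y, x) \<in> A" using that by simp
      then have "f y \<noteq> f x" using H unfolding A_def by blast
      then show ?thesis by simp
    qed
    ultimately show "proper_col (theta_E l1 l2 l3) f"
      unfolding proper_col_def E by blast
  qed
qed

lemma f_pt: "f (theta_pt l1 l2 l3 i j) = ext (f (0,0)) (f (0,1)) (theta_len l1 l2 l3 i) (\<lambda>j. f (i,j)) j"
  by (simp add: theta_pt_def ext_def)



definition gsel :: "nat \<Rightarrow> 'a \<Rightarrow> 'a \<Rightarrow> 'a \<Rightarrow> 'a" where
  "gsel i g1 g2 g3 = (if i = 1 then g1 else if i = 2 then g2 else g3)"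

lemma theta_len_gsel: "theta_len l1 l2 l3 i = gsel i l1 l2 l3"
  by (simp add: theta_len_def gsel_def)

lemma ext_restrict: "j \<le> l \<Longrightarrow> ext a b l (restrict h {Suc 0..<l}) j = ext a b l h j"
  by (simp add: ext_def)

lemma theta_count:
  fixes L :: "nat \<times> nat \<Rightarrow> nat set"
  assumes l: "l1 \<ge> 1" "l2 \<ge> 1" "l3 \<ge> 1"
    and fin: "\<And>v. v \<in> theta_V l1 l2 l3 \<Longrightarrow> finite (L v)"
  shows "num_list_col (theta_V l1 l2 l3) (theta_E l1 l2 l3) L =
    (\<Sum>a\<in>L (0,0). \<Sum>b\<in>L (0,1). card (PC (\<lambda>j. L (1,j)) l1 a b) * card (PC (\<lambda>j. L (2,j)) l2 a b) * card (PC (\<lambda>j. L (3,j)) l3 a b))"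
proof -
  define V where "V = theta_V l1 l2 l3"
  define len where "len = theta_len l1 l2 l3"
  define S where "S = {f \<in> PiE V L. proper_col (theta_E l1 l2 l3) f}"
  define P where "P = (\<lambda>i a b. PC (\<lambda>j. L (i,j)) (len i) a b)"
  define T where "T = (SIGMA a:L (0,0). SIGMA b:L (0,1). P 1 a b \<times> P 2 a b \<times> P 3 a b)"
  define Fm where "Fm = (\<lambda>f::nat\<times>nat \<Rightarrow> nat. (f (0,0), f (0,1), restrict (\<lambda>j. f (1,j)) {1..<len 1},
      restrict (\<lambda>j. f (2,j)) {1..<len 2}, restrict (\<lambda>j. f (3,j)) {1..<len 3}))"
  define Gm where "Gm = (\<lambda>(a::nat, b::nat, g1::nat\<Rightarrow>nat, g2::nat\<Rightarrow>nat, g3::nat\<Rightarrow>nat) (v::nat\<times>nat).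
      if v = (0,0) then a else if v = (0,1) then b else if v \<in> V then gsel (fst v) g1 g2 g3 (snd v) else undefined)"
  have Veq: "V = {(0,0),(0,1)} \<union> {(i,j). i \<in> {1,2,3} \<and> 1 \<le> j \<and> j < len i}"
    unfolding V_def len_def using theta_V_eq[OF l] .
  have len1: "len 1 = l1" and len2: "len 2 = l2" and len3: "len 3 = l3" by (simp_all add: len_def theta_len_def)
  have lenpos: "\<And>i. len i \<ge> 1" using l by (simp add: len_def theta_len_def)
  have Fm_sel: "gsel i (restrict (\<lambda>j. f (1,j)) {1..<len 1}) (restrict (\<lambda>j. f (2,j)) {1..<len 2}) (restrict (\<lambda>j. f (3,j)) {1..<len 3})
      = restrict (\<lambda>j. f (i,j)) {1..<len i}" if "i \<in> {1,2,3}" for i f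
    using that by (auto simp: gsel_def)
  have pt_cases: "theta_pt l1 l2 l3 i j = (if j = 0 then (0,0) else if j = len i then (0,1) else (i,j))" for i j
    by (simp add: theta_pt_def len_def)
  have FmS: "Fm f \<in> T" if f: "f \<in> S" for f
  proof -
    have fP: "f \<in> PiE V L" and fp: "proper_col (theta_E l1 l2 l3) f" using f by (auto simp: S_def)
    have inP: "restrict (\<lambda>j. f (i,j)) {1..<len i} \<in> P i (f (0,0)) (f (0,1))" if i: "i \<in> {1,2,3}" for i
    proof -
      have "restrict (\<lambda>j. f (i,j)) {1..<len i} \<in> PiE {1..<len i} (\<lambda>j. L (i,j))"
        unfolding restrict_PiE_iff
      proof
        fix j assume "j \<in> {1..<len i}"
        then have "(i,j) \<in> V" using i unfolding Veq by auto
        then show "f (i,j) \<in> L (i,j)" by (rule PiE_mem[OF fP])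
      qed
      moreover have "ext (f (0,0)) (f (0,1)) (len i) (restrict (\<lambda>j. f (i,j)) {1..<len i}) j \<noteq>
          ext (f (0,0)) (f (0,1)) (len i) (restrict (\<lambda>j. f (i,j)) {1..<len i}) (Suc j)" if j: "j < len i" for j
      proof -
        have "\<forall>i\<in>{1,2,3}. \<forall>j<theta_len l1 l2 l3 i. f (theta_pt l1 l2 l3 i j) \<noteq> f (theta_pt l1 l2 l3 i (Suc j))"
          using fp unfolding proper_theta .
        then have "f (theta_pt l1 l2 l3 i j) \<noteq> f (theta_pt l1 l2 l3 i (Suc j))"
          using i j unfolding len_def by blast
        then show ?thesis using j by (simp add: ext_restrict f_pt len_def)
      qed
      ultimately show ?thesis by (simp add: P_def PC_def)
    qed
    have "(0,0) \<in> V" "(0,1) \<in> V" unfolding Veq by auto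
    then have "f (0,0) \<in> L (0,0)" "f (0,1) \<in> L (0,1)" using fP by (auto intro: PiE_mem)
    then show ?thesis using inP[of 1] inP[of 2] inP[of 3] by (simp add: T_def Fm_def)
  qed
  have GmT: "Gm t \<in> S" if t: "t \<in> T" for t
  proof -
    obtain a b g1 g2 g3 where tt: "t = (a,b,g1,g2,g3)" by (cases t) auto
    have a: "a \<in> L (0,0)" and b: "b \<in> L (0,1)" and g1: "g1 \<in> P 1 a b" and g2: "g2 \<in> P 2 a b" and g3: "g3 \<in> P 3 a b"
      using t by (auto simp: T_def tt)
    have gi: "gsel i g1 g2 g3 \<in> P i a b" if "i \<in> {1,2,3}" for i
      using that g1 g2 g3 by (auto simp: gsel_def)
    have ival: "Gm t (theta_pt l1 l2 l3 i j) = ext a b (len i) (gsel i g1 g2 g3) j" if i: "i \<in> {1,2,3}" and j: "j \<le> len i" for i j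
    proof -
      consider "j = 0" | "j = len i" | "j \<noteq> 0" "j \<noteq> len i" by blast
      then show ?thesis
      proof cases
        case 1 then show ?thesis by (simp add: Gm_def tt pt_cases ext_def)
      next
        case 2 then show ?thesis using lenpos[of i] by (simp add: Gm_def tt pt_cases ext_def)
      next
        case 3
        then have "(i,j) \<in> V" "(i,j) \<noteq> (0,0)" "(i,j) \<noteq> (0,1)" using i j by (auto simp: Veq)
        moreover have "i \<noteq> 0" using i by auto
        ultimately show ?thesis using 3 by (simp add: Gm_def tt pt_cases ext_def)
      qed
    qed
    have "Gm t \<in> PiE V L"
    proof (rule PiE_I)
      fix v assume v: "v \<in> V"
      show "Gm t v \<in> L v"
      proof (cases "v = (0,0) \<or> v = (0,1)")
        case True then show ?thesis using a b by (auto simp: Gm_def tt)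
      next
        case False
        then obtain i j where vij: "v = (i,j)" "i \<in> {1,2,3}" "1 \<le> j" "j < len i" using v by (auto simp: Veq)
        have "gsel i g1 g2 g3 \<in> PiE {1..<len i} (\<lambda>j. L (i,j))" using gi[OF vij(2)] by (simp add: P_def PC_def)
        then have "gsel i g1 g2 g3 j \<in> L (i,j)" using vij by auto
        moreover have "i \<noteq> 0" using vij by auto
        ultimately show ?thesis using False v vij by (simp add: Gm_def tt)
      qed
    next
      fix v assume "v \<notin> V"
      moreover have "(0,0) \<in> V" "(0,1) \<in> V" by (auto simp: Veq)
      ultimately show "Gm t v = undefined" by (auto simp: Gm_def tt)
    qed
    moreover have "proper_col (theta_E l1 l2 l3) (Gm t)"
      unfolding proper_theta
    proof (intro ballI allI impI)
      fix i j assume i: "i \<in> {1::nat,2,3}" and j: "j < theta_len l1 l2 l3 i"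
      have "ext a b (len i) (gsel i g1 g2 g3) j \<noteq> ext a b (len i) (gsel i g1 g2 g3) (Suc j)"
        using gi[OF i] j by (simp add: P_def PC_def len_def)
      then show "Gm t (theta_pt l1 l2 l3 i j) \<noteq> Gm t (theta_pt l1 l2 l3 i (Suc j))"
        using ival[OF i, of j] ival[OF i, of "Suc j"] j by (simp add: len_def)
    qed
    ultimately show ?thesis by (simp add: S_def)
  qed
  have GF: "Gm (Fm f) = f" if f: "f \<in> S" for f
  proof
    fix v
    have fP: "f \<in> PiE V L" using f by (simp add: S_def)
    show "Gm (Fm f) v = f v"
    proof (cases "v = (0,0) \<or> v = (0,1)")
      case True then show ?thesis by (auto simp: Gm_def Fm_def)
    next
      case False
      show ?thesis
      proof (cases "v \<in> V")
        case True
        then obtain i j where vij: "v = (i,j)" "i \<in> {1,2,3}" "1 \<le> j" "j < len i" using False by (auto simp: Veq)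
        show ?thesis using vij False True Fm_sel[OF vij(2), of f] by (simp add: Gm_def Fm_def)
      next
        case False2: False
        then show ?thesis using fP False by (auto simp: Gm_def Fm_def)
      qed
    qed
  qed
  have FG: "Fm (Gm t) = t" if t: "t \<in> T" for t
  proof -
    obtain a b g1 g2 g3 where tt: "t = (a,b,g1,g2,g3)" by (cases t) auto
    have g: "g1 \<in> P 1 a b" "g2 \<in> P 2 a b" "g3 \<in> P 3 a b"
      using t by (auto simp: T_def tt)
    have rr: "restrict (\<lambda>j. Gm t (i,j)) {1..<len i} = gsel i g1 g2 g3" if i: "i \<in> {1,2,3}" for i
    proof
      fix j
      have gP: "gsel i g1 g2 g3 \<in> PiE {1..<len i} (\<lambda>j. L (i,j))" using i g by (auto simp: gsel_def P_def PC_def)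
      show "restrict (\<lambda>j. Gm t (i,j)) {1..<len i} j = gsel i g1 g2 g3 j"
      proof (cases "j \<in> {1..<len i}")
        case True
        then have "(i,j) \<in> V" "(i,j) \<noteq> (0,0)" "(i,j) \<noteq> (0,1)" using i by (auto simp: Veq)
        moreover have "i \<noteq> 0" using i by auto
        ultimately show ?thesis using True by (simp add: Gm_def tt)
      next
        case False
        have "gsel i g1 g2 g3 j = undefined" using gP False by (simp add: PiE_def extensional_def)
        moreover have "restrict (\<lambda>j. Gm t (i,j)) {1..<len i} j = undefined" by (simp only: restrict_def if_not_P[OF False])
        ultimately show ?thesis by simp
      qed
    qed
    show ?thesis using rr[of 1] rr[of 2] rr[of 3] by (simp add: Fm_def Gm_def tt gsel_def)
  qed
  have bij: "bij_betw Fm S T"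
    by (rule bij_betw_byWitness[where f'=Gm]) (use FmS GmT GF FG in auto)
  have "num_list_col V (theta_E l1 l2 l3) L = card S" by (simp add: num_list_col_def S_def)
  also have "\<dots> = card T" using bij by (rule bij_betw_same_card)
  also have "\<dots> = (\<Sum>a\<in>L (0,0). \<Sum>b\<in>L (0,1). card (P 1 a b) * card (P 2 a b) * card (P 3 a b))"
  proof -
    have f00: "finite (L (0,0))" "finite (L (0,1))" using fin by (auto simp: V_def[symmetric] Veq)
    have fP: "finite (P i a b)" if "i \<in> {1,2,3}" for i a b
      unfolding P_def by (rule PC_finite) (use that fin in \<open>auto simp: V_def[symmetric] Veq\<close>)
    show ?thesis unfolding T_def using f00 fP
      by (simp add: card_cartesian_product finite_cartesian_product mult.assoc)
  qed
  finally show ?thesis by (simp add: V_def P_def len_def theta_len_def)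
qed



lemma combine:
  fixes w1 w2 w3 :: "nat \<Rightarrow> nat \<Rightarrow> int" and U Wl :: "nat set" and m :: nat
  assumes fU: "finite U" and cU: "card U = m" and fW: "finite Wl" and cW: "card Wl = m"
    and pt1: "\<And>a b. w1 a b \<ge> M1" and pt3: "\<And>a b. w3 a b \<ge> M3" and M1: "M1 \<ge> 0" and M3: "M3 \<ge> 0"
    and pt2: "\<And>a b. w2 a b \<ge> c" and c0: "c \<ge> 0"
    and row2: "\<And>a. (\<Sum>b\<in>Wl. w2 a b) \<ge> int m * c + d"
    and cyc: "(\<Sum>a\<in>U. \<Sum>b\<in>Wl. w1 a b * w3 a b) \<ge> K"
  shows "(\<Sum>a\<in>U. \<Sum>b\<in>Wl. w1 a b * w2 a b * w3 a b) \<ge> c * K + M1 * M3 * int m * d"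
proof -
  have split: "w1 a b * w2 a b * w3 a b = c * (w1 a b * w3 a b) + w1 a b * w3 a b * (w2 a b - c)" for a b
    by (simp add: algebra_simps)
  have p1: "w1 a b * w3 a b * (w2 a b - c) \<ge> M1 * M3 * (w2 a b - c)" for a b
  proof -
    have "w1 a b \<ge> 0" using pt1[of a b] M1 by linarith
    then have "w1 a b * w3 a b \<ge> M1 * M3" using pt1 pt3 M1 M3 by (intro mult_mono) auto
    then show ?thesis using pt2[of a b] by (intro mult_right_mono) auto
  qed
  have e0: "(\<Sum>a\<in>U. \<Sum>b\<in>Wl. w1 a b * w2 a b * w3 a b) =
      c * (\<Sum>a\<in>U. \<Sum>b\<in>Wl. w1 a b * w3 a b) + (\<Sum>a\<in>U. \<Sum>b\<in>Wl. w1 a b * w3 a b * (w2 a b - c))"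
    by (simp add: split sum.distrib sum_distrib_left)
  have e1: "(\<Sum>a\<in>U. \<Sum>b\<in>Wl. w1 a b * w3 a b * (w2 a b - c)) \<ge> (\<Sum>a\<in>U. \<Sum>b\<in>Wl. M1 * M3 * (w2 a b - c))"
    by (intro sum_mono p1)
  have e2: "(\<Sum>a\<in>U. \<Sum>b\<in>Wl. M1 * M3 * (w2 a b - c)) = (\<Sum>a\<in>U. M1 * M3 * ((\<Sum>b\<in>Wl. w2 a b) - int m * c))"
    using cW by (simp add: sum_distrib_left[symmetric] sum_subtractf)
  have e3: "(\<Sum>a\<in>U. M1 * M3 * ((\<Sum>b\<in>Wl. w2 a b) - int m * c)) \<ge> (\<Sum>a\<in>U. M1 * M3 * d)"
  proof (intro sum_mono)
    fix a
    have "(\<Sum>b\<in>Wl. w2 a b) - int m * c \<ge> d" using row2[of a] by simp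
    then show "M1 * M3 * ((\<Sum>b\<in>Wl. w2 a b) - int m * c) \<ge> M1 * M3 * d" using M1 M3 by (intro mult_left_mono) auto
  qed
  have e4: "(\<Sum>a\<in>U. M1 * M3 * d) = M1 * M3 * int m * d" using cU by simp
  have "(\<Sum>a\<in>U. \<Sum>b\<in>Wl. w1 a b * w2 a b * w3 a b) \<ge> c * (\<Sum>a\<in>U. \<Sum>b\<in>Wl. w1 a b * w3 a b) + M1 * M3 * int m * d"
    using e0 e1 e2 e3 e4 by linarith
  moreover have "c * (\<Sum>a\<in>U. \<Sum>b\<in>Wl. w1 a b * w3 a b) \<ge> c * K" using cyc c0 by (intro mult_left_mono)
  ultimately show ?thesis by linarith
qed

lemma Af_add:
  assumes "m \<ge> 1" "p \<ge> 1" "q \<ge> 1"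
  shows "Af (int m) (p + q) = Af (int m) p * Af (int m) q + (int m - 1) * Bf (int m) p * Bf (int m) q"
proof -
  define S where "S = {0..<m}"
  have fS: "finite S" and cS: "card S = m" and a: "0 \<in> S" using assms by (auto simp: S_def)
  define Ls where "Ls = (\<lambda>j::nat. S)"
  have "int (W Ls 0 (p - 1 + (q - 1) + 1) 0) = (\<Sum>b\<in>S. int (W Ls 0 (p-1) b) * int (W (\<lambda>j. Ls (j + (p - 1 + 1))) b (q-1) 0))"
    using W_CK[of Ls 0 "p-1" "q-1" 0] by (simp add: Ls_def)
  also have "\<dots> = (\<Sum>b\<in>S. (if b = 0 then Af (int m) p * Af (int m) q else Bf (int m) p * Bf (int m) q))"
  proof (intro sum.cong refl)
    fix b assume b: "b \<in> S"
    have "int (W Ls 0 (p-1) b) = (if 0 = b then Af (int (card S)) (p-1+1) else Bf (int (card S)) (p-1+1))"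
      by (rule W_const[OF fS a b]) (simp add: Ls_def)
    moreover have "int (W (\<lambda>j. Ls (j + (p - 1 + 1))) b (q-1) 0) = (if b = 0 then Af (int (card S)) (q-1+1) else Bf (int (card S)) (q-1+1))"
      by (rule W_const[OF fS b a]) (simp add: Ls_def)
    ultimately show "int (W Ls 0 (p-1) b) * int (W (\<lambda>j. Ls (j + (p - 1 + 1))) b (q-1) 0) =
        (if b = 0 then Af (int m) p * Af (int m) q else Bf (int m) p * Bf (int m) q)"
      using assms cS by auto
  qed
  also have "\<dots> = Af (int m) p * Af (int m) q + (int m - 1) * Bf (int m) p * Bf (int m) q"
    using fS a cS assms(1) by (simp add: sum.remove[OF fS a] card_Diff_singleton of_nat_diff mult.assoc)
  finally have e1: "int (W Ls 0 (p - 1 + (q - 1) + 1) 0) = Af (int m) p * Af (int m) q + (int m - 1) * Bf (int m) p * Bf (int m) q" .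
  have "int (W Ls 0 (p - 1 + (q - 1) + 1) 0) = (if (0::nat) = 0 then Af (int (card S)) (p - 1 + (q - 1) + 1 + 1) else Bf (int (card S)) (p - 1 + (q - 1) + 1 + 1))"
    by (rule W_const[OF fS a a]) (simp add: Ls_def)
  moreover have "p - 1 + (q - 1) + 1 + 1 = p + q" using assms by simp
  ultimately have "int (W Ls 0 (p - 1 + (q - 1) + 1) 0) = Af (int m) (p + q)" using cS by (simp only: if_True refl)
  then show ?thesis using e1 by simp
qed



lemma cycle_theta:
  assumes m3: "m \<ge> 3" and l1: "l1 \<ge> 1" and l3: "l3 \<ge> 1" and n4: "l1 + l3 \<ge> 4" and ev: "even (l1 + l3)"
    and fU: "finite U" and cU: "card U = m" and fW: "finite Wl" and cW: "card Wl = m"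
    and P1: "\<And>j. 1 \<le> j \<Longrightarrow> j < l1 \<Longrightarrow> finite (P1 j) \<and> card (P1 j) = m"
    and P3: "\<And>j. 1 \<le> j \<Longrightarrow> j < l3 \<Longrightarrow> finite (P3 j) \<and> card (P3 j) = m"
  shows "int (\<Sum>a\<in>U. \<Sum>b\<in>Wl. W P1 a (l1-1) b * W P3 a (l3-1) b) \<ge> int m * Af (int m) (l1+l3)"
proof -
  define n where "n = l1 + l3"
  define C where "C = (\<lambda>j. if j = 0 then U else if j < l1 then P1 j else if j = l1 then Wl else P3 (n - j))"
  have Cj: "finite (C j) \<and> card (C j) = m" if j: "j < n" for j
  proof -
    consider "j = 0" | "j \<noteq> 0" "j < l1" | "j = l1" "j \<noteq> 0" | "j \<noteq> 0" "\<not> j < l1" "j \<noteq> l1" by blast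
    then show ?thesis
    proof cases
      case 1 then show ?thesis using fU cU by (simp add: C_def)
    next
      case 2 then show ?thesis using P1[of j] by (simp add: C_def)
    next
      case 3 then show ?thesis using fW cW by (simp add: C_def)
    next
      case 4
      then have "1 \<le> n - j" "n - j < l3" using j by (auto simp: n_def)
      then show ?thesis using 4 P3[of "n - j"] by (simp add: C_def)
    qed
  qed
  have C0: "C 0 = U" by (simp add: C_def)
  have Cl1: "C l1 = Wl" using l1 by (simp add: C_def)
  have eq: "W C a (n-1) a = (\<Sum>b\<in>Wl. W P1 a (l1-1) b * W P3 a (l3-1) b)" for a
  proof -
    have e1: "l1 - 1 + (l3 - 1) + 1 = n - 1" "l1 - 1 + 1 = l1" using l1 l3 by (auto simp: n_def)
    have "W C a (n-1) a = (\<Sum>b\<in>C l1. W C a (l1-1) b * W (\<lambda>j. C (j + l1)) b (l3-1) a)"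
      using W_CK[of C a "l1-1" "l3-1" a] unfolding e1 .
    also have "\<dots> = (\<Sum>b\<in>Wl. W P1 a (l1-1) b * W P3 a (l3-1) b)"
    proof (unfold Cl1, intro sum.cong refl)
      fix b
      have "W C a (l1-1) b = W P1 a (l1-1) b"
      proof (rule W_cong)
        fix j assume "1 \<le> j" "j \<le> l1 - 1"
        then have "j < l1" "j \<noteq> 0" by auto
        then show "C j = P1 j" by (simp add: C_def)
      qed
      moreover have "W (\<lambda>j. C (j + l1)) b (l3-1) a = W (\<lambda>j. P3 (l3 - 1 + 1 - j)) b (l3-1) a"
      proof (rule W_cong)
        fix j assume "1 \<le> j" "j \<le> l3 - 1"
        then show "C (j + l1) = P3 (l3 - 1 + 1 - j)" using l3 by (simp add: C_def n_def)
      qed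
      moreover have "W (\<lambda>j. P3 (l3 - 1 + 1 - j)) b (l3-1) a = W P3 a (l3-1) b"
        by (rule W_rev[symmetric])
      ultimately show "W C a (l1-1) b * W (\<lambda>j. C (j + l1)) b (l3-1) a = W P1 a (l1-1) b * W P3 a (l3-1) b"
        by simp
    qed
    finally show ?thesis .
  qed
  have "int (\<Sum>a\<in>C 0. W C a (n-1) a) \<ge> int m * Af (int m) n"
    by (rule even_cycle[OF m3]) (use n4 ev Cj in \<open>auto simp: n_def\<close>)
  then show ?thesis using eq C0 by (simp add: n_def)
qed

lemma sum_diag:
  assumes "finite S" "card S = m"
  shows "(\<Sum>a\<in>S. \<Sum>b\<in>S. (if a = b then (X::int) else Y)) = int m * X + int m * (int m - 1) * Y"
proof -
  have "(\<Sum>b\<in>S. (if a = b then X else Y)) = X + (int m - 1) * Y" if a: "a \<in> S" for a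
  proof -
    have "(\<Sum>b\<in>S. (if a = b then X else Y)) = X + (\<Sum>b\<in>S - {a}. (if a = b then X else Y))"
      using sum.remove[OF assms(1) a, of "\<lambda>b. if a = b then X else Y"] by simp
    also have "(\<Sum>b\<in>S - {a}. (if a = b then X else Y)) = (\<Sum>b\<in>S - {a}. Y)" by (intro sum.cong) auto
    also have "\<dots> = (int m - 1) * Y"
    proof -
      have "m \<ge> 1" using assms a by (metis One_nat_def Suc_leI card_gt_0_iff empty_iff)
      then show ?thesis using assms a by (simp add: card_Diff_singleton of_nat_diff)
    qed
    finally show ?thesis .
  qed
  then have "(\<Sum>a\<in>S. \<Sum>b\<in>S. (if a = b then X else Y)) = (\<Sum>a\<in>S. X + (int m - 1) * Y)" by simp
  also have "\<dots> = int m * X + int m * (int m - 1) * Y" using assms by (simp add: algebra_simps)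
  finally show ?thesis .
qed



lemma count_W:
  fixes L :: "nat \<times> nat \<Rightarrow> nat set"
  assumes l: "l1 \<ge> 1" "l2 \<ge> 1" "l3 \<ge> 1"
    and fin: "\<And>v. v \<in> theta_V l1 l2 l3 \<Longrightarrow> finite (L v)"
  shows "int (num_list_col (theta_V l1 l2 l3) (theta_E l1 l2 l3) L) =
    (\<Sum>a\<in>L (0,0). \<Sum>b\<in>L (0,1). int (W (\<lambda>j. L (1,j)) a (l1-1) b) * int (W (\<lambda>j. L (2,j)) a (l2-1) b) * int (W (\<lambda>j. L (3,j)) a (l3-1) b))"
proof -
  have Veq: "theta_V l1 l2 l3 = {(0,0),(0,1)} \<union> {(i,j). i \<in> {1,2,3} \<and> 1 \<le> j \<and> j < theta_len l1 l2 l3 i}"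
    using theta_V_eq[OF l] .
  have pc: "card (PC (\<lambda>j. L (i,j)) li a b) = W (\<lambda>j. L (i,j)) a (li-1) b"
    if "i \<in> {1,2,3}" "li = theta_len l1 l2 l3 i" for i li a b
  proof -
    have li: "li \<ge> 1" using that l by (auto simp: theta_len_def)
    have "card (PC (\<lambda>j. L (i,j)) (Suc (li - 1)) a b) = W (\<lambda>j. L (i,j)) a (li-1) b"
    proof (rule PC_card)
      fix j assume "1 \<le> j" "j \<le> li - 1"
      then have "(i,j) \<in> theta_V l1 l2 l3" using that li unfolding Veq by auto
      then show "finite (L (i,j))" by (rule fin)
    qed
    then show ?thesis using li by simp
  qed
  have p1: "\<And>a b. card (PC (\<lambda>j. L (1,j)) l1 a b) = W (\<lambda>j. L (1,j)) a (l1-1) b"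
    by (rule pc) (auto simp: theta_len_def)
  have p2: "\<And>a b. card (PC (\<lambda>j. L (2,j)) l2 a b) = W (\<lambda>j. L (2,j)) a (l2-1) b"
    by (rule pc) (auto simp: theta_len_def)
  have p3: "\<And>a b. card (PC (\<lambda>j. L (3,j)) l3 a b) = W (\<lambda>j. L (3,j)) a (l3-1) b"
    by (rule pc) (auto simp: theta_len_def)
  have tc: "num_list_col (theta_V l1 l2 l3) (theta_E l1 l2 l3) L =
    (\<Sum>a\<in>L (0,0). \<Sum>b\<in>L (0,1). card (PC (\<lambda>j. L (1,j)) l1 a b) * card (PC (\<lambda>j. L (2,j)) l2 a b) * card (PC (\<lambda>j. L (3,j)) l3 a b))"
    by (rule theta_count[OF l]) (rule fin)
  show ?thesis unfolding tc p1 p2 p3 by simp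
qed

lemma chrom_formula:
  assumes l: "l1 \<ge> 1" "l2 \<ge> 1" "l3 \<ge> 1"
  shows "int (chrom_poly (theta_V l1 l2 l3) (theta_E l1 l2 l3) m) =
    int m * (Af (int m) l1 * Af (int m) l2 * Af (int m) l3) + int m * (int m - 1) * (Bf (int m) l1 * Bf (int m) l2 * Bf (int m) l3)"
proof -
  define S where "S = {1..m}"
  have fS: "finite S" and cS: "card S = m" by (auto simp: S_def)
  have wc: "int (W (\<lambda>j. S) a (li-1) b) = (if a = b then Af (int m) li else Bf (int m) li)"
    if "a \<in> S" "b \<in> S" "li \<ge> 1" for a b li
  proof -
    have "int (W (\<lambda>j. S) a (li-1) b) = (if a = b then Af (int (card S)) (li-1+1) else Bf (int (card S)) (li-1+1))"
      by (rule W_const[OF fS that(1,2)]) simp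
    then show ?thesis using that(3) cS by simp
  qed
  have "int (chrom_poly (theta_V l1 l2 l3) (theta_E l1 l2 l3) m) =
    (\<Sum>a\<in>S. \<Sum>b\<in>S. int (W (\<lambda>j. S) a (l1-1) b) * int (W (\<lambda>j. S) a (l2-1) b) * int (W (\<lambda>j. S) a (l3-1) b))"
    unfolding chrom_poly_def using count_W[OF l, of "\<lambda>_. {1..m}"] by (simp add: S_def)
  also have "\<dots> = (\<Sum>a\<in>S. \<Sum>b\<in>S. (if a = b then Af (int m) l1 * Af (int m) l2 * Af (int m) l3 else Bf (int m) l1 * Bf (int m) l2 * Bf (int m) l3))"
  proof (intro sum.cong refl)
    fix a b assume a: "a \<in> S" and b: "b \<in> S"
    show "int (W (\<lambda>j. S) a (l1-1) b) * int (W (\<lambda>j. S) a (l2-1) b) * int (W (\<lambda>j. S) a (l3-1) b) =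
      (if a = b then Af (int m) l1 * Af (int m) l2 * Af (int m) l3 else Bf (int m) l1 * Bf (int m) l2 * Bf (int m) l3)"
      unfolding wc[OF a b l(1)] wc[OF a b l(2)] wc[OF a b l(3)] by simp
  qed
  also have "\<dots> = int m * (Af (int m) l1 * Af (int m) l2 * Af (int m) l3) + int m * (int m - 1) * (Bf (int m) l1 * Bf (int m) l2 * Bf (int m) l3)"
    by (rule sum_diag[OF fS cS])
  finally show ?thesis .
qed



lemma main_lower:
  fixes L :: "nat \<times> nat \<Rightarrow> nat set"
  assumes l: "l1 \<ge> 1" "l2 \<ge> 1" "l3 \<ge> 1" and n4: "l1 + l3 \<ge> 4"
    and par1: "even l1 \<longleftrightarrow> even l3" and par2: "\<not> (even l1 \<longleftrightarrow> even l2)"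
    and m3: "m \<ge> 3" and La: "is_m_assignment (theta_V l1 l2 l3) m L"
  shows "chrom_poly (theta_V l1 l2 l3) (theta_E l1 l2 l3) m \<le> num_list_col (theta_V l1 l2 l3) (theta_E l1 l2 l3) L"
proof -
  define V where "V = theta_V l1 l2 l3"
  have Veq: "V = {(0,0),(0,1)} \<union> {(i,j). i \<in> {1,2,3} \<and> 1 \<le> j \<and> j < theta_len l1 l2 l3 i}"
    unfolding V_def using theta_V_eq[OF l] .
  have Lv: "finite (L v) \<and> card (L v) = m" if "v \<in> V" for v
    using La that by (auto simp: is_m_assignment_def V_def)
  have m2: "m \<ge> 2" using m3 by simp
  define A1 where "A1 = Af (int m) l1"
  define A2 where "A2 = Af (int m) l2"
  define A3 where "A3 = Af (int m) l3"
  define B1 where "B1 = Bf (int m) l1"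
  define B2 where "B2 = Bf (int m) l2"
  define B3 where "B3 = Bf (int m) l3"
  define w1 where "w1 = (\<lambda>a b. int (W (\<lambda>j. L (1,j)) a (l1-1) b))"
  define w2 where "w2 = (\<lambda>a b. int (W (\<lambda>j. L (2,j)) a (l2-1) b))"
  define w3 where "w3 = (\<lambda>a b. int (W (\<lambda>j. L (3,j)) a (l3-1) b))"
  define U where "U = L (0,0)"
  define Wl where "Wl = L (0,1)"
  have U: "finite U" "card U = m" using Lv[of "(0,0)"] by (auto simp: U_def Veq)
  have Wl: "finite Wl" "card Wl = m" using Lv[of "(0,1)"] by (auto simp: Wl_def Veq)
  have cnt: "int (num_list_col V (theta_E l1 l2 l3) L) = (\<Sum>a\<in>U. \<Sum>b\<in>Wl. w1 a b * w2 a b * w3 a b)"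
    unfolding V_def U_def Wl_def w1_def w2_def w3_def by (rule count_W[OF l]) (use Lv in \<open>simp add: V_def\<close>)
  have chr: "int (chrom_poly V (theta_E l1 l2 l3) m) = int m * (A1 * A2 * A3) + int m * (int m - 1) * (B1 * B2 * B3)"
    unfolding V_def A1_def A2_def A3_def B1_def B2_def B3_def by (rule chrom_formula[OF l])
  have Li: "finite (L (i,j)) \<and> card (L (i,j)) = m" if "i \<in> {1,2,3}" "1 \<le> j" "j < theta_len l1 l2 l3 i" for i j
    using Lv[of "(i,j)"] that by (simp add: Veq)
  have L1: "\<And>j. 1 \<le> j \<Longrightarrow> j \<le> l1 - 1 \<Longrightarrow> finite (L (1,j)) \<and> card (L (1,j)) = m"
    using Li[of 1] by (auto simp: theta_len_def)
  have L2: "\<And>j. 1 \<le> j \<Longrightarrow> j \<le> l2 - 1 \<Longrightarrow> finite (L (2,j)) \<and> card (L (2,j)) = m"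
    using Li[of 2] by (auto simp: theta_len_def)
  have L3: "\<And>j. 1 \<le> j \<Longrightarrow> j \<le> l3 - 1 \<Longrightarrow> finite (L (3,j)) \<and> card (L (3,j)) = m"
    using Li[of 3] by (auto simp: theta_len_def)
  have pt1: "w1 a b \<ge> (if odd l1 then A1 else B1)" for a b
  proof -
    have s: "Suc (l1 - 1) = l1" using l by simp
    have "int (W (\<lambda>j. L (1,j)) a (l1-1) b) \<ge> (if odd (Suc (l1-1)) then Af (int m) (Suc (l1-1)) else Bf (int m) (Suc (l1-1)))"
      by (rule W_pt[OF m2]) (use L1 in auto)
    then show ?thesis unfolding s w1_def A1_def B1_def .
  qed
  have pt2: "w2 a b \<ge> (if odd l2 then A2 else B2)" for a b
  proof -
    have s: "Suc (l2 - 1) = l2" using l by simp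
    have "int (W (\<lambda>j. L (2,j)) a (l2-1) b) \<ge> (if odd (Suc (l2-1)) then Af (int m) (Suc (l2-1)) else Bf (int m) (Suc (l2-1)))"
      by (rule W_pt[OF m2]) (use L2 in auto)
    then show ?thesis unfolding s w2_def A2_def B2_def .
  qed
  have pt3: "w3 a b \<ge> (if odd l3 then A3 else B3)" for a b
  proof -
    have s: "Suc (l3 - 1) = l3" using l by simp
    have "int (W (\<lambda>j. L (3,j)) a (l3-1) b) \<ge> (if odd (Suc (l3-1)) then Af (int m) (Suc (l3-1)) else Bf (int m) (Suc (l3-1)))"
      by (rule W_pt[OF m2]) (use L3 in auto)
    then show ?thesis unfolding s w3_def A3_def B3_def .
  qed
  have row2: "(\<Sum>b\<in>Wl. w2 a b) \<ge> Gf m l2 m" for a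
  proof -
    have "int (\<Sum>b\<in>Wl. W (\<lambda>j. L (2,j)) a (l2-1) b) \<ge> Gf m (Suc (l2-1)) (card Wl)"
      by (rule W_inv[OF m2 _ Wl(1)]) (use L2 in auto)
    then show ?thesis using Wl l by (simp add: w2_def del: Bf.simps)
  qed
  have cyc0: "int (\<Sum>a\<in>U. \<Sum>b\<in>Wl. W (\<lambda>j. L (1,j)) a (l1-1) b * W (\<lambda>j. L (3,j)) a (l3-1) b) \<ge> int m * Af (int m) (l1+l3)"
  proof (rule cycle_theta[OF m3 l(1) l(3) n4 _ U Wl])
    show "even (l1 + l3)" using par1 by simp
    show "\<And>j. 1 \<le> j \<Longrightarrow> j < l1 \<Longrightarrow> finite (L (1,j)) \<and> card (L (1,j)) = m" using L1 by simp
    show "\<And>j. 1 \<le> j \<Longrightarrow> j < l3 \<Longrightarrow> finite (L (3,j)) \<and> card (L (3,j)) = m" using L3 by simp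
  qed
  have afadd: "Af (int m) (l1+l3) = A1 * A3 + (int m - 1) * B1 * B3"
    unfolding A1_def A3_def B1_def B3_def by (rule Af_add) (use m3 l in auto)
  define K where "K = int m * (A1 * A3 + (int m - 1) * B1 * B3)"
  have cyc: "(\<Sum>a\<in>U. \<Sum>b\<in>Wl. w1 a b * w3 a b) \<ge> K"
    using cyc0 afadd by (simp add: K_def w1_def w3_def)
  have nonneg: "A1 \<ge> 0" "A2 \<ge> 0" "A3 \<ge> 0" "B1 \<ge> 0" "B2 \<ge> 0" "B3 \<ge> 0"
    using Af_nonneg[of "int m"] Bf_nonneg[of "int m"] m2
    by (auto simp: A1_def A2_def A3_def B1_def B2_def B3_def simp del: Bf.simps)
  have goal: "(\<Sum>a\<in>U. \<Sum>b\<in>Wl. w1 a b * w2 a b * w3 a b) \<ge> int m * (A1 * A2 * A3) + int m * (int m - 1) * (B1 * B2 * B3)"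
  proof (cases "odd l1")
    case True
    then have o3: "odd l3" and e2: "even l2" using par1 par2 by auto
    have A2B2: "A2 = B2 + 1" using e2 by (simp add: A2_def B2_def Af_def del: Bf.simps)
    have r: "(\<Sum>b\<in>Wl. w2 a b) \<ge> int m * B2 + 1" for a
      using row2[of a] e2 by (simp add: Gf_def B2_def del: Bf.simps)
    have "(\<Sum>a\<in>U. \<Sum>b\<in>Wl. w1 a b * w2 a b * w3 a b) \<ge> B2 * K + A1 * A3 * int m * 1"
    proof (rule combine[OF U Wl])
      show "\<And>a b. A1 \<le> w1 a b" using pt1 True by simp
      show "\<And>a b. A3 \<le> w3 a b" using pt3 o3 by simp
      show "\<And>a b. B2 \<le> w2 a b" using pt2 e2 by simp
      show "\<And>a. int m * B2 + 1 \<le> (\<Sum>b\<in>Wl. w2 a b)" using r by simp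
    qed (use nonneg cyc in auto)
    moreover have "B2 * K + A1 * A3 * int m * 1 = int m * (A1 * A2 * A3) + int m * (int m - 1) * (B1 * B2 * B3)"
      unfolding K_def A2B2 by (simp add: algebra_simps)
    ultimately show ?thesis by simp
  next
    case False
    then have e3: "even l3" and o2: "odd l2" using par1 par2 by auto
    have A2B2: "B2 = A2 + 1" using o2 by (simp add: A2_def B2_def Af_def del: Bf.simps)
    have r: "(\<Sum>b\<in>Wl. w2 a b) \<ge> int m * A2 + (int m - 1)" for a
      using row2[of a] o2 A2B2 by (simp add: Gf_def B2_def algebra_simps del: Bf.simps)
    have "(\<Sum>a\<in>U. \<Sum>b\<in>Wl. w1 a b * w2 a b * w3 a b) \<ge> A2 * K + B1 * B3 * int m * (int m - 1)"
    proof (rule combine[OF U Wl])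
      show "\<And>a b. B1 \<le> w1 a b" using pt1 False by simp
      show "\<And>a b. B3 \<le> w3 a b" using pt3 e3 by simp
      show "\<And>a b. A2 \<le> w2 a b" using pt2 o2 by simp
      show "\<And>a. int m * A2 + (int m - 1) \<le> (\<Sum>b\<in>Wl. w2 a b)" using r by simp
    qed (use nonneg cyc in auto)
    moreover have "A2 * K + B1 * B3 * int m * (int m - 1) = int m * (A1 * A2 * A3) + int m * (int m - 1) * (B1 * B2 * B3)"
      unfolding K_def A2B2 by (simp add: algebra_simps)
    ultimately show ?thesis by simp
  qed
  show ?thesis using goal cnt chr by (simp add: V_def)
qed



lemma Af_two: "Af 2 l = (if even l then 1 else 0)"
  by (simp add: Af_def Bf_two)

lemma chrom_small:
  assumes l: "l1 \<ge> 1" "l2 \<ge> 1" "l3 \<ge> 1"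
    and par1: "even l1 \<longleftrightarrow> even l3" and par2: "\<not> (even l1 \<longleftrightarrow> even l2)"
    and m: "m \<le> 2"
  shows "chrom_poly (theta_V l1 l2 l3) (theta_E l1 l2 l3) m = 0"
proof -
  have f: "int (chrom_poly (theta_V l1 l2 l3) (theta_E l1 l2 l3) m) =
    int m * (Af (int m) l1 * Af (int m) l2 * Af (int m) l3) + int m * (int m - 1) * (Bf (int m) l1 * Bf (int m) l2 * Bf (int m) l3)"
    by (rule chrom_formula[OF l])
  consider "m = 0" | "m = 1" | "m = 2" using m by linarith
  then have "int m * (Af (int m) l1 * Af (int m) l2 * Af (int m) l3) + int m * (int m - 1) * (Bf (int m) l1 * Bf (int m) l2 * Bf (int m) l3) = 0"
  proof cases
    case 1 then show ?thesis by simp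
  next
    case 2 then show ?thesis using Af_one[OF l(1)] by simp
  next
    case 3 then show ?thesis using par1 par2 by (cases "even l1") (auto simp: Af_two Bf_two simp del: Bf.simps)
  qed
  then show ?thesis using f by simp
qed

lemma all_m:
  assumes l: "l1 \<ge> 1" "l2 \<ge> 1" "l3 \<ge> 2"
    and par1: "even l1 \<longleftrightarrow> even l3" and par2: "\<not> (even l1 \<longleftrightarrow> even l2)"
  shows "list_col_fun (theta_V l1 l2 l3) (theta_E l1 l2 l3) m = chrom_poly (theta_V l1 l2 l3) (theta_E l1 l2 l3) m"
proof -
  have l3: "l3 \<ge> 1" using l by simp
  have n4: "l1 + l3 \<ge> 4"
  proof (cases "l1 = 1")
    case True
    then have "odd l3" using par1 by simp
    then have "l3 \<noteq> 2" by auto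
    then have "l3 \<ge> 3" using l by simp
    then show ?thesis using True by simp
  next
    case False
    then show ?thesis using l by simp
  qed
  let ?V = "theta_V l1 l2 l3" and ?E = "theta_E l1 l2 l3"
  let ?S = "{num_list_col ?V ?E L | L. is_m_assignment ?V m L}"
  have mem: "chrom_poly ?V ?E m \<in> ?S"
  proof -
    have "is_m_assignment ?V m (\<lambda>_. {1..m})" by (simp add: is_m_assignment_def)
    then show ?thesis unfolding chrom_poly_def by blast
  qed
  have low: "chrom_poly ?V ?E m \<le> x" if xS: "x \<in> ?S" for x
  proof -
    obtain L where x: "x = num_list_col ?V ?E L" and La: "is_m_assignment ?V m L" using xS by blast
    show ?thesis
    proof (cases "m \<ge> 3")
      case True
      then show ?thesis using main_lower[OF l(1,2) l3 n4 par1 par2 True La] x by simp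
    next
      case False
      then show ?thesis using chrom_small[OF l(1,2) l3 par1 par2, of m] by simp
    qed
  qed
  show ?thesis unfolding list_col_fun_def by (rule cInf_eq_minimum[OF mem low])
qed

theorem lemma2p4:
  fixes l1 l2 l3 :: nat
  assumes "l1 \<ge> 1" "l1 \<le> l2" "l1 \<le> l3" "l2 \<ge> 2" "l3 \<ge> 2"
    and "even l1 \<longleftrightarrow> even l3"
    and "\<not> (even l1 \<longleftrightarrow> even l2)"
  shows "(l1 + l3 \<ge> 6 \<longrightarrow> enum_chrom_choosable (theta_V l1 l2 l3) (theta_E l1 l2 l3))
       \<and> (l1 + l3 = 4 \<longrightarrow> (\<forall>m \<ge> 4. list_col_fun (theta_V l1 l2 l3) (theta_E l1 l2 l3) m
                                     = chrom_poly (theta_V l1 l2 l3) (theta_E l1 l2 l3) m))"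
proof -
  have l2: "l2 \<ge> 1" using assms by simp
  have "\<And>m. list_col_fun (theta_V l1 l2 l3) (theta_E l1 l2 l3) m = chrom_poly (theta_V l1 l2 l3) (theta_E l1 l2 l3) m"
    by (rule all_m[OF assms(1) l2 assms(5) assms(6) assms(7)])
  then show ?thesis by (simp add: enum_chrom_choosable_def)
qed


end
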